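(* Let $d\ge1$ be an integer, $c\in[0,\tfrac12)$, $\alpha>1$, and $p\in(0,\tfrac12]$. Let $P$ be the distribution on $[0,1]^d$ placing mass $p$ on the point $(c,\dots,c)$ and mass $1-p$ on $(1-c,\dots,1-c)$, and let $Q$ place mass $1-p$ on $(c,\dots,c)$ and mass $p$ on $(1-c,\dots,1-c)$. Let $K=e^{-2(1/2-c)^2 d}$. If $p+K\le\tfrac12$, then $R_\alpha(\mathrm{Bern}(P),\mathrm{Bern}(Q))\ge r_\alpha(p+K)$.
   Context: For distributions $P,Q$ and $\alpha>1$, $R_\alpha(P,Q)=\frac{1}{\alpha-1}\log\int (dP/dQ)^\alpha\,dQ$ is the Rényi divergence of order $\alpha$. For $p\in[0,1]$, $r_\alpha(p)=\frac{1}{\alpha-1}\log\left(p^\alpha(1-p)^{1-\alpha}+(1-p)^\alpha p^{1-\alpha}\right)$, the Rényi divergence between the two-point distributions $(p,1-p)$ and $(1-p,p)$. For $x\in[0,1]^d$, $\mathrm{Bern}(x)$ is the random vector in $\{0,1\}^d$ with independent coordinates, coordinate $i$ equal to $1$ with probability $x_i$; for a distribution $P$ on $[0,1]^d$, $\mathrm{Bern}(P)$ is the distribution of $\mathrm{Bern}(X)$ with $X\sim P$. *)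

theory Defs
  imports "HOL-Probability.Probability"
begin

text \<open>Renyi divergence of order alpha between pmfs:
  (1/(alpha-1)) ln (sum_x P(x)^alpha Q(x)^(1-alpha)), i.e. the discrete form of
  (1/(alpha-1)) log of the integral of (dP/dQ)^alpha dQ; it is +infinity when P is not
  absolutely continuous w.r.t. Q.\<close>
definition renyi_div :: "real \<Rightarrow> 'a pmf \<Rightarrow> 'a pmf \<Rightarrow> ereal" where
  "renyi_div \<alpha> P Q =
     (if set_pmf P \<subseteq> set_pmf Q
      then ereal (1 / (\<alpha> - 1) *
             ln (infsum (\<lambda>x. pmf P x powr \<alpha> * pmf Q x powr (1 - \<alpha>)) (set_pmf Q)))
      else \<infinity>)"

definition renyi_r :: "real \<Rightarrow> real \<Rightarrow> real" where
  "renyi_r \<alpha> p = 1 / (\<alpha> - 1) *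
     ln (p powr \<alpha> * (1 - p) powr (1 - \<alpha>) + (1 - p) powr \<alpha> * p powr (1 - \<alpha>))"

text \<open>Bern(x) for x in [0,1]^d: independent coordinates 0..d-1; outcomes are
  functions nat => bool, equal to False outside {0..<d} (so the support is {0,1}^d).\<close>
definition bern_vec :: "nat \<Rightarrow> (nat \<Rightarrow> real) \<Rightarrow> (nat \<Rightarrow> bool) pmf" where
  "bern_vec d x = Pi_pmf {..<d} False (\<lambda>i. bernoulli_pmf (x i))"

definition bern_dist :: "nat \<Rightarrow> (nat \<Rightarrow> real) pmf \<Rightarrow> (nat \<Rightarrow> bool) pmf" where
  "bern_dist d P = bind_pmf P (bern_vec d)"

definition two_point :: "real \<Rightarrow> 'a \<Rightarrow> 'a \<Rightarrow> 'a pmf" where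
  "two_point q u v = map_pmf (\<lambda>b. if b then u else v) (bernoulli_pmf q)"

end

theory Submission
  imports Defs
begin

lemma persp:
  fixes x y a :: real
  assumes "y > 0" "x \<ge> 0"
  shows "y * (x / y) powr a = x powr a * y powr (1 - a)"
proof -
  have "y * (x / y) powr a = y * (x powr a / y powr a)"
    using assms by (simp add: powr_divide)
  also have "\<dots> = x powr a * (y powr 1 / y powr a)" using assms by simp
  also have "y powr 1 / y powr a = y powr (1 - a)" by (simp add: powr_diff)
  finally show ?thesis .
qed

lemma two_term:
  fixes x1 x2 y1 y2 a :: real
  assumes a: "a > 1" and nn: "x1 \<ge> 0" "x2 \<ge> 0" "y1 \<ge> 0" "y2 \<ge> 0"
    and z1: "y1 = 0 \<Longrightarrow> x1 = 0" and z2: "y2 = 0 \<Longrightarrow> x2 = 0"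
  shows "(x1 + x2) powr a * (y1 + y2) powr (1 - a)
         \<le> x1 powr a * y1 powr (1 - a) + x2 powr a * y2 powr (1 - a)"
proof (cases "y1 = 0 \<or> y2 = 0")
  case True
  then show ?thesis using z1 z2 by auto
next
  case False
  then have y1: "y1 > 0" and y2: "y2 > 0" using nn by auto
  show ?thesis
  proof (cases "x1 = 0 \<or> x2 = 0")
    case True
    have m: "(y1 + y2) powr (1 - a) \<le> y1 powr (1 - a)" "(y1 + y2) powr (1 - a) \<le> y2 powr (1 - a)"
      using a y1 y2 by (auto intro!: powr_mono2')
    show ?thesis
    proof (cases "x1 = 0")
      case True
      then show ?thesis using m(2) nn by (simp add: mult_left_mono)
    next
      case False
      then have "x2 = 0" using \<open>x1 = 0 \<or> x2 = 0\<close> by auto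
      then show ?thesis using m(1) nn by (simp add: mult_left_mono)
    qed
  next
    case False
    then have x1: "x1 > 0" and x2: "x2 > 0" using nn by auto
    define Y where "Y = y1 + y2"
    have Y: "Y > 0" using y1 y2 Y_def by auto
    define l where "l = y1 / Y"
    have l: "0 \<le> l" "l \<le> 1" using y1 y2 by (auto simp: l_def Y_def)
    have "1 - l = y2 / Y" using Y by (simp add: l_def Y_def field_simps)
    have c1: "(1 - l) * (x2 / y2) = x2 / Y" using \<open>1 - l = y2 / Y\<close> y2 by simp
    have c2: "l * (x1 / y1) = x1 / Y" using y1 by (simp add: l_def)
    have comb: "(x1 + x2) / Y = (1 - l) * (x2 / y2) + l * (x1 / y1)"
      unfolding c1 c2 by (simp add: add_divide_distrib)
    have "((1 - l) *\<^sub>R (x2 / y2) + l *\<^sub>R (x1 / y1)) powr a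
          \<le> (1 - l) * (x2 / y2) powr a + l * (x1 / y1) powr a"
      using x1 x2 y1 y2 l a
      by (intro convex_onD[OF powr_convex]) auto
    then have "((x1 + x2) / Y) powr a \<le> (1 - l) * (x2 / y2) powr a + l * (x1 / y1) powr a"
      using comb by simp
    then have "Y * ((x1 + x2) / Y) powr a \<le> Y * ((1 - l) * (x2 / y2) powr a + l * (x1 / y1) powr a)"
      using Y by simp
    also have "\<dots> = y2 * (x2 / y2) powr a + y1 * (x1 / y1) powr a"
    proof -
      have "Y * (1 - l) = y2" "Y * l = y1" using Y \<open>1 - l = y2 / Y\<close> by (auto simp: l_def)
      moreover have "Y * ((1 - l) * (x2 / y2) powr a + l * (x1 / y1) powr a)
         = (Y * (1 - l)) * (x2 / y2) powr a + (Y * l) * (x1 / y1) powr a"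
        by (simp add: distrib_left)
      ultimately show ?thesis by simp
    qed
    finally show ?thesis
      using persp[of Y "x1 + x2" a] persp[of y1 x1 a] persp[of y2 x2 a] Y y1 y2 x1 x2
      by (simp add: Y_def)
  qed
qed

lemma sum_term:
  fixes u v :: "'b \<Rightarrow> real" and a :: real
  assumes "finite S" "a > 1" "\<And>x. x \<in> S \<Longrightarrow> u x \<ge> 0" "\<And>x. x \<in> S \<Longrightarrow> v x \<ge> 0"
    "\<And>x. x \<in> S \<Longrightarrow> v x = 0 \<Longrightarrow> u x = 0"
  shows "(sum u S) powr a * (sum v S) powr (1 - a) \<le> (\<Sum>x\<in>S. u x powr a * v x powr (1 - a))"
  using assms
proof (induction S rule: finite_induct)
  case empty
  then show ?case by simp
next
  case (insert x F)
  have su: "sum u F \<ge> 0" "sum v F \<ge> 0" using insert.prems by (auto intro: sum_nonneg)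
  have sz: "sum v F = 0 \<Longrightarrow> sum u F = 0"
  proof -
    assume "sum v F = 0"
    then have "\<forall>y\<in>F. v y = 0" using insert.prems insert.hyps by (subst (asm) sum_nonneg_eq_0_iff) auto
    then show "sum u F = 0" using insert.prems by (auto intro!: sum.neutral)
  qed
  have "(sum u (insert x F)) powr a * (sum v (insert x F)) powr (1 - a)
       = (u x + sum u F) powr a * (v x + sum v F) powr (1 - a)" using insert.hyps by simp
  also have "\<dots> \<le> u x powr a * v x powr (1 - a) + (sum u F) powr a * (sum v F) powr (1 - a)"
    using insert.prems su sz by (intro two_term) auto
  also have "\<dots> \<le> u x powr a * v x powr (1 - a) + (\<Sum>y\<in>F. u y powr a * v y powr (1 - a))"
    using insert.IH insert.prems by auto
  finally show ?case using insert.hyps by simp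
qed

lemma homog:
  fixes s u v a :: real
  assumes "s \<ge> 0" "u \<ge> 0" "v \<ge> 0"
  shows "(u * s) powr a * (v * s) powr (1 - a) = s * (u powr a * v powr (1 - a))"
proof (cases "s = 0")
  case False
  then have "s powr a * s powr (1 - a) = s" using assms by (simp flip: powr_add)
  then show ?thesis using assms by (simp add: powr_mult algebra_simps)
qed simp

lemma binary:
  fixes a u v q :: real
  assumes a: "a > 1" and u: "0 \<le> u" "u \<le> q" and q: "0 < q" "q \<le> 1/2"
    and v: "1 - q \<le> v" "v \<le> 1" and v1: "v = 1 \<Longrightarrow> u = 1"
  shows "q powr a * (1 - q) powr (1 - a) + (1 - q) powr a * q powr (1 - a)
    \<le> u powr a * v powr (1 - a) + (1 - u) powr a * (1 - v) powr (1 - a)"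
proof -
  have vlt: "v < 1" using v1 v u q by force
  define r where "r = (1 - 2 * q) / (v - u)"
  define t where "t = q - u * r"
  define s where "s = t + r"
  have r0: "r \<ge> 0" using u v q by (auto simp: r_def)
  have e1: "q = u * s + (1 - u) * t" by (simp add: s_def t_def algebra_simps)
  have e2: "1 - q = v * s + (1 - v) * t"
  proof (cases "v = u")
    case True
    then have "q = 1/2" using u v q by linarith
    then show ?thesis using True by (simp add: s_def t_def r_def algebra_simps)
  next
    case False
    then have "v - u > 0" using u v q by linarith
    then have "(v - u) * r = 1 - 2 * q" by (simp add: r_def)
    then show ?thesis by (simp add: s_def t_def algebra_simps)
  qed
  have t0: "t \<ge> 0"
  proof (cases "v = u")
    case True
    then show ?thesis using q by (simp add: t_def r_def)
  next
    case False
    then have vu: "v - u > 0" using u v q by linarith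
    have "u * (1 - 2 * q) \<le> q * (v - u)"
    proof -
      have "u * (1 - q) \<le> q * (1 - q)" using u q by (intro mult_right_mono) auto
      moreover have "q * (1 - q) \<le> q * v" using q v by (intro mult_left_mono) auto
      ultimately show ?thesis by (simp add: algebra_simps)
    qed
    then have "u * r \<le> q" using vu by (simp add: r_def field_simps)
    then show ?thesis by (simp add: t_def)
  qed
  have s1: "s \<le> 1"
  proof (cases "v = u")
    case True
    then show ?thesis using q by (simp add: s_def t_def r_def)
  next
    case False
    then have vu: "v - u > 0" using u v q by linarith
    have "(1 - u) * (1 - 2 * q) \<le> (1 - q) * (v - u)"
    proof -
      have "(1 - q) * (1 - v) \<le> (1 - q) * q" using v q by (intro mult_left_mono) auto
      moreover have "(1 - q) * q \<le> (1 - u) * q" using u q by (intro mult_right_mono) auto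
      ultimately show ?thesis by (simp add: algebra_simps)
    qed
    then have "(1 - u) * r \<le> 1 - q" using vu by (simp add: r_def field_simps)
    then show ?thesis by (simp add: s_def t_def algebra_simps)
  qed
  have s0: "s \<ge> 0" using t0 r0 by (simp add: s_def)
  have t1: "t \<le> 1" using s1 r0 by (simp add: s_def)
  define P1 where "P1 = u powr a * v powr (1 - a)"
  define P2 where "P2 = (1 - u) powr a * (1 - v) powr (1 - a)"
  have vpos: "v > 0" using v q by linarith
  have "q powr a * (1 - q) powr (1 - a)
      = (u * s + (1 - u) * t) powr a * (v * s + (1 - v) * t) powr (1 - a)"
    using e1 e2 by simp
  also have "\<dots> \<le> (u * s) powr a * (v * s) powr (1 - a) + ((1 - u) * t) powr a * ((1 - v) * t) powr (1 - a)"
    using a u q vpos vlt s0 t0 s1 t1 by (intro two_term) auto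
  also have "\<dots> = s * P1 + t * P2"
    unfolding P1_def P2_def using u q v s0 t0 by (simp add: homog)
  finally have i1: "q powr a * (1 - q) powr (1 - a) \<le> s * P1 + t * P2" .
  have e3: "1 - q = u * (1 - s) + (1 - u) * (1 - t)" using e1 by (simp add: algebra_simps)
  have e4: "q = v * (1 - s) + (1 - v) * (1 - t)" using e2 by (simp add: algebra_simps)
  have "(1 - q) powr a * q powr (1 - a)
      = (u * (1 - s) + (1 - u) * (1 - t)) powr a * (v * (1 - s) + (1 - v) * (1 - t)) powr (1 - a)"
    using e3 e4 by simp
  also have "\<dots> \<le> (u * (1 - s)) powr a * (v * (1 - s)) powr (1 - a)
       + ((1 - u) * (1 - t)) powr a * ((1 - v) * (1 - t)) powr (1 - a)"
    using a u q vpos vlt s0 t0 s1 t1 by (intro two_term) auto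
  also have "\<dots> = (1 - s) * P1 + (1 - t) * P2"
    unfolding P1_def P2_def using u q v s1 t1 by (simp add: homog)
  finally have i2: "(1 - q) powr a * q powr (1 - a) \<le> (1 - s) * P1 + (1 - t) * P2" .
  have "s * P1 + t * P2 + ((1 - s) * P1 + (1 - t) * P2) = P1 + P2" by (simp add: algebra_simps)
  then show ?thesis using i1 i2 unfolding P1_def P2_def by linarith
qed


definition cnt :: "nat \<Rightarrow> (nat \<Rightarrow> bool) \<Rightarrow> real" where
  "cnt d x = (\<Sum>i<d. if x i then 1 else 0)"

lemma hoeff_A:
  fixes c :: real
  assumes d: "d > 0" and c: "0 \<le> c" "c < 1/2"
  shows "measure_pmf.prob (bern_vec d (\<lambda>_. c)) {x. cnt d x \<ge> d / 2} \<le> exp (- 2 * (1/2 - c)^2 * real d)"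
proof -
  interpret binomial_distribution d c using c by unfold_locales auto
  have "measure_pmf.prob (bern_vec d (\<lambda>_. c)) {x. cnt d x \<ge> d / 2}
      = measure_pmf.prob (binomial_pmf d c) {x. real x \<ge> d / 2}"
    unfolding bern_vec_def cnt_def
    using prob_binomial_pmf_conv_coins[OF d, of "\<lambda>y. y \<ge> d / 2"] by simp
  also have "{x. real x \<ge> d / 2} = {x. c + (1/2 - c) \<le> real x / real d}"
    using d by (auto simp: field_simps)
  also have "measure_pmf.prob (binomial_pmf d c) \<dots> \<le> exp (real_of_int (- 2 * int d) * (1/2 - c)\<^sup>2)"
    using c by (intro prob_ge'[OF d]) auto
  also have "\<dots> = exp (- 2 * (1/2 - c)^2 * real d)" by simp
  finally show ?thesis .
qed

lemma hoeff_B: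
  fixes c :: real
  assumes d: "d > 0" and c: "0 \<le> c" "c < 1/2"
  shows "measure_pmf.prob (bern_vec d (\<lambda>_. 1 - c)) {x. cnt d x < d / 2} \<le> exp (- 2 * (1/2 - c)^2 * real d)"
proof -
  interpret binomial_distribution d "1 - c" using c by unfold_locales auto
  have "measure_pmf.prob (bern_vec d (\<lambda>_. 1 - c)) {x. cnt d x < d / 2}
      = measure_pmf.prob (binomial_pmf d (1 - c)) {x. real x < d / 2}"
    unfolding bern_vec_def cnt_def
    using prob_binomial_pmf_conv_coins[OF d, of "\<lambda>y. y < d / 2"] by simp
  also have "\<dots> \<le> measure_pmf.prob (binomial_pmf d (1 - c)) {x. real x / real d \<le> (1 - c) - (1/2 - c)}"
    using d by (intro measure_pmf.finite_measure_mono) (auto simp: field_simps)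
  also have "\<dots> \<le> exp (real_of_int (- 2 * int d) * (1/2 - c)\<^sup>2)"
    using c by (intro prob_le'[OF d]) auto
  also have "\<dots> = exp (- 2 * (1/2 - c)^2 * real d)" by simp
  finally show ?thesis .
qed

lemma mix_pmf:
  assumes "0 \<le> w" "w \<le> 1"
  shows "bern_dist d (two_point w (\<lambda>_. c) (\<lambda>_. 1 - c)) =
    bind_pmf (bernoulli_pmf w) (\<lambda>b. if b then bern_vec d (\<lambda>_. c) else bern_vec d (\<lambda>_. 1 - c))"
  unfolding bern_dist_def two_point_def bind_map_pmf
  by (intro bind_pmf_cong) auto

lemma mix_pmf':
  assumes "0 \<le> w" "w \<le> 1"
  shows "pmf (bern_dist d (two_point w (\<lambda>_. c) (\<lambda>_. 1 - c))) x =
    w * pmf (bern_vec d (\<lambda>_. c)) x + (1 - w) * pmf (bern_vec d (\<lambda>_. 1 - c)) x"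
  using assms unfolding mix_pmf[OF assms] pmf_bind by (simp add: algebra_simps)

lemma mix_measure:
  fixes M A B :: "'a pmf"
  assumes "finite S" "set_pmf A \<subseteq> S" "set_pmf B \<subseteq> S" "set_pmf M \<subseteq> S"
    "\<And>x. pmf M x = w * pmf A x + (1 - w) * pmf B x"
  shows "measure_pmf.prob M E = w * measure_pmf.prob A E + (1 - w) * measure_pmf.prob B E"
proof -
  have gen: "measure_pmf.prob N E = sum (pmf N) (E \<inter> S)" if "set_pmf N \<subseteq> S" for N :: "'a pmf"
  proof -
    have "measure_pmf.prob N E = measure_pmf.prob N (E \<inter> set_pmf N)" by (simp add: measure_Int_set_pmf)
    also have "E \<inter> set_pmf N = (E \<inter> S) \<inter> set_pmf N" using that by auto
    also have "measure_pmf.prob N \<dots> = measure_pmf.prob N (E \<inter> S)" by (simp add: measure_Int_set_pmf)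
    also have "\<dots> = sum (pmf N) (E \<inter> S)" using assms(1) by (simp add: measure_measure_pmf_finite)
    finally show ?thesis .
  qed
  show ?thesis
    using assms by (simp add: gen sum.distrib sum_distrib_left)
qed

theorem theorem2:
  fixes d :: nat and c \<alpha> p :: real
  assumes "d \<ge> 1" and "0 \<le> c" and "c < 1/2" and "\<alpha> > 1"
    and "0 < p" and "p \<le> 1/2"
    and "p + exp (- 2 * (1/2 - c)^2 * real d) \<le> 1/2"
  shows "ereal (renyi_r \<alpha> (p + exp (- 2 * (1/2 - c)^2 * real d)))
     \<le> renyi_div \<alpha>
          (bern_dist d (two_point p (\<lambda>_. c) (\<lambda>_. 1 - c)))
          (bern_dist d (two_point (1 - p) (\<lambda>_. c) (\<lambda>_. 1 - c)))"
proof -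
  note a = assms
  define K where "K = exp (- 2 * (1/2 - c)^2 * real d)"
  define q where "q = p + K"
  define A where "A = bern_vec d (\<lambda>_. c)"
  define B where "B = bern_vec d (\<lambda>_. 1 - c)"
  define PM where "PM = bern_dist d (two_point p (\<lambda>_. c) (\<lambda>_. 1 - c))"
  define QM where "QM = bern_dist d (two_point (1 - p) (\<lambda>_. c) (\<lambda>_. 1 - c))"
  have d0: "d > 0" using a by auto
  have K0: "K > 0" by (simp add: K_def)
  have pP: "pmf PM x = p * pmf A x + (1 - p) * pmf B x" for x
    unfolding PM_def A_def B_def using a by (intro mix_pmf') auto
  have pQ: "pmf QM x = (1 - p) * pmf A x + (1 - (1 - p)) * pmf B x" for x
    unfolding QM_def A_def B_def using a by (intro mix_pmf') auto
  define S0 where "S0 = {f :: nat \<Rightarrow> bool. \<forall>x. x \<notin> {..<d} \<longrightarrow> f x = False}"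
  have "S0 = PiE_dflt {..<d} False (\<lambda>_. UNIV)" by (auto simp: S0_def PiE_dflt_def)
  then have finS0: "finite S0" by auto
  have sA: "set_pmf A \<subseteq> S0" unfolding A_def bern_vec_def S0_def by (rule set_Pi_pmf_subset) auto
  have sB: "set_pmf B \<subseteq> S0" unfolding B_def bern_vec_def S0_def by (rule set_Pi_pmf_subset) auto
  have nzP: "pmf PM x = 0 \<longleftrightarrow> pmf A x = 0 \<and> pmf B x = 0" for x
  proof -
    have "p * pmf A x \<ge> 0" "(1 - p) * pmf B x \<ge> 0" using a by auto
    then show ?thesis unfolding pP using a by (auto simp: add_nonneg_eq_0_iff)
  qed
  have nzQ: "pmf QM x = 0 \<longleftrightarrow> pmf A x = 0 \<and> pmf B x = 0" for x
  proof -
    have "(1 - p) * pmf A x \<ge> 0" "(1 - (1 - p)) * pmf B x \<ge> 0" using a by auto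
    then show ?thesis unfolding pQ using a by (auto simp: add_nonneg_eq_0_iff)
  qed
  have supp: "set_pmf PM = set_pmf QM" using nzP nzQ by (auto simp: set_pmf_iff)
  have sQ: "set_pmf QM \<subseteq> S0" using sA sB nzQ by (force simp: set_pmf_iff)
  have sP: "set_pmf PM \<subseteq> S0" using sQ supp by simp
  define SQ where "SQ = set_pmf QM"
  have finSQ: "finite SQ" using sQ finS0 finite_subset SQ_def by blast
  have mP: "measure_pmf.prob PM E = p * measure_pmf.prob A E + (1 - p) * measure_pmf.prob B E" for E
    by (rule mix_measure[OF finS0 sA sB sP pP])
  have mQ: "measure_pmf.prob QM E = (1 - p) * measure_pmf.prob A E + (1 - (1 - p)) * measure_pmf.prob B E" for E
    by (rule mix_measure[OF finS0 sA sB sQ pQ])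
  define Z where "Z = {x. cnt d x < d / 2}"
  have cZ: "- Z = {x. cnt d x \<ge> d / 2}" by (auto simp: Z_def)
  have hA: "measure_pmf.prob A (- Z) \<le> K"
    unfolding cZ A_def K_def using hoeff_A[OF d0 a(2,3)] by simp
  have hB: "measure_pmf.prob B Z \<le> K"
    unfolding Z_def B_def K_def using hoeff_B[OF d0 a(2,3)] by simp
  have compl: "measure_pmf.prob M (- Z) = 1 - measure_pmf.prob M Z" for M :: "(nat \<Rightarrow> bool) pmf"
    using measure_pmf.prob_compl[of Z M] by (simp add: Compl_eq_Diff_UNIV)
  define u where "u = measure_pmf.prob PM Z"
  define v where "v = measure_pmf.prob QM Z"
  have AZ: "measure_pmf.prob A Z \<ge> 1 - K" using hA compl[of A] by simp
  have u0: "0 \<le> u" by (simp add: u_def)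
  have uq: "u \<le> q"
  proof -
    have "u = p * measure_pmf.prob A Z + (1 - p) * measure_pmf.prob B Z" by (simp add: u_def mP)
    also have "\<dots> \<le> p * 1 + 1 * K"
      using a hB by (intro add_mono mult_mono) auto
    finally show ?thesis by (simp add: q_def)
  qed
  have vq: "1 - q \<le> v"
  proof -
    have "(1 - p) * (1 - K) \<le> (1 - p) * measure_pmf.prob A Z + (1 - (1 - p)) * measure_pmf.prob B Z"
      using a AZ by (intro add_increasing2 mult_left_mono) auto
    moreover have "1 - q \<le> (1 - p) * (1 - K)" using a K0 by (simp add: q_def algebra_simps)
    ultimately show ?thesis by (simp add: v_def mQ)
  qed
  have v1: "v \<le> 1" by (simp add: v_def)
  have dom: "p * measure_pmf.prob PM E \<le> measure_pmf.prob QM E" for E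
  proof -
    have "p * p \<le> p * (1/2)" using a by (intro mult_left_mono) auto
    then have pp1: "p * p \<le> 1 - p" using a by linarith
    have "p * (1 - p) \<le> p * 1" using a by (intro mult_left_mono) auto
    then have pp: "p * p \<le> 1 - p" "p * (1 - p) \<le> p" using pp1 by auto
    let ?a = "measure_pmf.prob A E" and ?b = "measure_pmf.prob B E"
    have "p * measure_pmf.prob PM E = (p * p) * ?a + (p * (1 - p)) * ?b" by (simp add: mP algebra_simps)
    also have "\<dots> \<le> (1 - p) * ?a + p * ?b" using pp by (intro add_mono mult_right_mono) auto
    finally show ?thesis by (simp add: mQ)
  qed
  have vu1: "v = 1 \<Longrightarrow> u = 1"
  proof -
    assume "v = 1"
    then have "measure_pmf.prob QM (- Z) = 0" using compl[of QM] by (simp add: v_def)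
    then have "p * measure_pmf.prob PM (- Z) \<le> 0" using dom[of "- Z"] by simp
    then have "measure_pmf.prob PM (- Z) = 0" using a by (simp add: mult_le_0_iff measure_nonneg antisym)
    then show "u = 1" using compl[of PM] by (simp add: u_def)
  qed
  have q0: "0 < q" "q \<le> 1/2" using a K0 by (auto simp: q_def K_def intro: add_pos_pos)
  have bin: "q powr \<alpha> * (1 - q) powr (1 - \<alpha>) + (1 - q) powr \<alpha> * q powr (1 - \<alpha>)
    \<le> u powr \<alpha> * v powr (1 - \<alpha>) + (1 - u) powr \<alpha> * (1 - v) powr (1 - \<alpha>)"
    by (rule binary[OF a(4) u0 uq q0 vq v1 vu1])
  define F where "F = (\<lambda>x. pmf PM x powr \<alpha> * pmf QM x powr (1 - \<alpha>))"
  have sumZ: "sum (pmf N) (SQ \<inter> E) = measure_pmf.prob N E" if "set_pmf N = SQ" for N E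
  proof -
    have "sum (pmf N) (SQ \<inter> E) = measure_pmf.prob N (E \<inter> set_pmf N)"
      using finSQ that by (simp add: measure_measure_pmf_finite Int_commute)
    then show ?thesis by (simp add: measure_Int_set_pmf)
  qed
  have T1: "u powr \<alpha> * v powr (1 - \<alpha>) \<le> sum F (SQ \<inter> Z)"
  proof -
    have "(sum (pmf PM) (SQ \<inter> Z)) powr \<alpha> * (sum (pmf QM) (SQ \<inter> Z)) powr (1 - \<alpha>) \<le> sum F (SQ \<inter> Z)"
      unfolding F_def using finSQ a by (intro sum_term) (auto simp: SQ_def set_pmf_iff)
    then show ?thesis using sumZ[of PM Z] sumZ[of QM Z] supp by (simp add: u_def v_def SQ_def)
  qed
  have T2: "(1 - u) powr \<alpha> * (1 - v) powr (1 - \<alpha>) \<le> sum F (SQ \<inter> - Z)"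
  proof -
    have "(sum (pmf PM) (SQ \<inter> - Z)) powr \<alpha> * (sum (pmf QM) (SQ \<inter> - Z)) powr (1 - \<alpha>) \<le> sum F (SQ \<inter> - Z)"
      unfolding F_def using finSQ a by (intro sum_term) (auto simp: SQ_def set_pmf_iff)
    then show ?thesis using sumZ[of PM "- Z"] sumZ[of QM "- Z"] supp compl[of PM] compl[of QM]
      by (simp add: u_def v_def SQ_def)
  qed
  have split: "sum F SQ = sum F (SQ \<inter> Z) + sum F (SQ \<inter> - Z)"
    using finSQ by (metis Diff_eq sum.Int_Diff)
  have phipos: "0 < q powr \<alpha> * (1 - q) powr (1 - \<alpha>) + (1 - q) powr \<alpha> * q powr (1 - \<alpha>)"
    using q0 by (intro add_pos_pos mult_pos_pos) auto
  have main: "q powr \<alpha> * (1 - q) powr (1 - \<alpha>) + (1 - q) powr \<alpha> * q powr (1 - \<alpha>) \<le> sum F SQ"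
    using bin T1 T2 split by linarith
  have "renyi_r \<alpha> q \<le> 1 / (\<alpha> - 1) * ln (sum F SQ)"
    unfolding renyi_r_def using a phipos main by (intro mult_left_mono ln_mono) auto
  moreover have "renyi_div \<alpha> PM QM = ereal (1 / (\<alpha> - 1) * ln (sum F SQ))"
    unfolding renyi_div_def using supp finSQ by (simp add: SQ_def F_def)
  ultimately show ?thesis by (simp add: PM_def QM_def q_def K_def)
qed

end
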